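(* Let $m\ge2$ and $t\ge1$ be integers, and put $g_+=\gcd(m+1,2^t+1)$, $g_-=\gcd(m+1,2^t-1)$. Then the set of all $a\in\{1,2,\dots,m\}$ satisfying $f_2^t(a)=a$ equals $$\Big\{\tfrac{m+1}{g_+}\,\xi_1:\ \xi_1 \text{ odd},\ 1\le \xi_1<g_+\Big\}\ \cup\ \Big\{\tfrac{m+1}{g_-}\,\xi_2:\ \xi_2 \text{ odd},\ 1\le\xi_2<g_-\Big\}.$$
   Context: For an integer $m\ge2$, $X=\{0,1,\dots,m^2-1\}$, each element written with exactly two base-$m$ digits (leading zeros allowed), and $f(x)=D(x)-A(x)$ is the two-digit base-$m$ Kaprekar map ($D(x)$, $A(x)$: digits of $x$ in nonincreasing, resp. nondecreasing, order). The map $f_2:\{0,1,\dots,m\}\to\{0,1,\dots,m\}$ is defined by $f(a(m-1))=f_2(a)(m-1)$; explicitly $f_2(0)=0$ and $f_2(a)=|2a-m-1|$ for $1\le a\le m$. $f_2^t$ denotes the $t$-fold iterate. *)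

theory Defs
  imports Main
begin

definition f2 :: "nat \<Rightarrow> nat \<Rightarrow> nat" where
  "f2 m a = (if a = 0 then 0 else nat \<bar>2 * int a - int m - 1\<bar>)"

end

theory Submission imports Defs begin


definition G :: "int \<Rightarrow> int \<Rightarrow> int" where "G n y = \<bar>y mod (2*n) - n\<bar>"

lemma L1:
  assumes "G (int m + 1) y \<noteq> 0"
  shows "f2 m (nat (G (int m + 1) y)) = nat (G (int m + 1) (2*y))"
proof -
  define n where "n = int m + 1"
  define r where "r = y mod (2*n)"
  have n: "n \<ge> 1" by (simp add: n_def)
  have r: "0 \<le> r" "r < 2*n" using n by (auto simp: r_def)
  have e: "(2*y) mod (2*n) = (2*r) mod (2*n)" unfolding r_def by (simp add: mod_mult_right_eq)
  have Gy: "G n y = \<bar>r - n\<bar>" by (simp add: G_def r_def)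
  have rn: "r \<noteq> n" using assms Gy n_def by auto
  show ?thesis
  proof (cases "r < n")
    case True
    have "(2*r) mod (2*n) = 2*r" using r True by (simp add: mod_pos_pos_trivial)
    then show ?thesis using True Gy e r rn unfolding n_def[symmetric]
      by (simp add: f2_def G_def n_def)
  next
    case False
    have "(2*r) mod (2*n) = (2*r - 2*n + 2*n) mod (2*n)" by simp
    also have "\<dots> = (2*r - 2*n) mod (2*n)" by (rule mod_add_self2)
    also have "\<dots> = 2*r - 2*n" using r False by (intro mod_pos_pos_trivial) auto
    finally have "(2*r) mod (2*n) = 2*r - 2*n" .
    then show ?thesis using False Gy e r rn unfolding n_def[symmetric]
      by (simp add: f2_def G_def n_def)
  qed
qed

lemma f2_0: "f2 m 0 = 0" by (simp add: f2_def)

lemma L2: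
  "(f2 m ^^ k) (nat (G (int m + 1) y)) =
     (if \<exists>j<k. G (int m + 1) (2^j*y) = 0 then 0 else nat (G (int m + 1) (2^k*y)))"
proof (induction k)
  case 0 then show ?case by simp
next
  case (Suc k)
  show ?case
  proof (cases "\<exists>j<k. G (int m + 1) (2^j*y) = 0")
    case True
    then have "\<exists>j<Suc k. G (int m + 1) (2^j*y) = 0" using less_Suc_eq by blast
    then show ?thesis using True Suc by (simp add: f2_0)
  next
    case False
    show ?thesis
    proof (cases "G (int m + 1) (2^k*y) = 0")
      case True
      then have "\<exists>j<Suc k. G (int m + 1) (2^j*y) = 0" by auto
      then show ?thesis using True False Suc by (simp add: f2_0)
    next
      case F2: False
      have "\<not> (\<exists>j<Suc k. G (int m + 1) (2^j*y) = 0)" using False F2 less_Suc_eq by auto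
      have "(f2 m ^^ Suc k) (nat (G (int m + 1) y)) = f2 m (nat (G (int m + 1) (2^k*y)))"
        using Suc False by simp
      also have "\<dots> = nat (G (int m + 1) (2^Suc k*y))" using L1[OF F2] by (simp add: mult.assoc)
      finally show ?thesis using \<open>\<not> (\<exists>j<Suc k. G (int m + 1) (2^j*y) = 0)\<close>
        by (simp only: if_False)
    qed
  qed
qed

lemma NT:
  fixes n c a :: nat
  assumes c: "odd c" and a: "1 \<le> a" "a < n"
  shows "(2*n) dvd c*(n-a) \<longleftrightarrow>
     a \<in> {n div gcd n c * \<xi> | \<xi>. odd \<xi> \<and> 1 \<le> \<xi> \<and> \<xi> < gcd n c}"
proof -
  define g where "g = gcd n c"
  define n' where "n' = n div g"
  define c' where "c' = c div g"
  have gpos: "g > 0" using c g_def by (metis gcd_eq_0_iff odd_pos less_numeral_extra(3) neq0_conv)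
  have nn: "n = g * n'" by (simp add: g_def n'_def)
  have cc: "c = g * c'" by (simp add: g_def c'_def)
  have cop: "coprime n' c'" unfolding n'_def c'_def g_def
    using gpos g_def by (metis div_gcd_coprime gcd_eq_0_iff less_numeral_extra(3))
  have godd: "odd g" using c cc by auto
  have c'odd: "odd c'" using c cc by auto
  have n'pos: "n' > 0" using nn a by (cases n') auto
  have cop2: "coprime (2*n') c'" using cop c'odd by (simp add: coprime_commute)
  have "(2*n) dvd c*(n-a) \<longleftrightarrow> (2*n') dvd c'*(n-a)"
    using nn cc gpos by (simp add: ac_simps)
  also have "\<dots> \<longleftrightarrow> (2*n') dvd (n-a)"
    using cop2 by (simp add: coprime_dvd_mult_right_iff)
  also have "\<dots> \<longleftrightarrow> a \<in> {n' * \<xi> | \<xi>. odd \<xi> \<and> 1 \<le> \<xi> \<and> \<xi> < g}"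
  proof
    assume "(2*n') dvd (n-a)"
    then obtain k where k: "n - a = 2*n'*k" by auto
    have e0: "int (n-a) = int (2*n'*k)" using k by simp
    have e1: "int n - int a = 2*int n'*int k" using e0 a by (simp add: of_nat_diff)
    have e2: "int n = int g * int n'" using nn by simp
    have ia: "int a = int n' * (int g - 2 * int k)" using e1 e2 by (simp add: algebra_simps)
    have lt: "2*k < g"
    proof (rule ccontr)
      assume "\<not> 2*k < g"
      then have "int g - 2 * int k \<le> 0" by simp
      then have "int a \<le> 0" using ia n'pos by (simp add: mult_nonneg_nonpos)
      then show False using a by simp
    qed
    have kpos: "k \<ge> 1" using k a n'pos by (cases k) auto
    have "int (g - 2*k) = int g - 2*int k" using lt by (simp add: of_nat_diff)
    then have "int a = int (n' * (g - 2*k))" using ia by simp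
    then have "a = n' * (g - 2*k)" by (simp only: of_nat_eq_iff)
    moreover have "odd (g - 2*k)" using godd lt by auto
    moreover have "1 \<le> g - 2*k" "g - 2*k < g" using lt kpos by auto
    ultimately show "a \<in> {n' * \<xi> | \<xi>. odd \<xi> \<and> 1 \<le> \<xi> \<and> \<xi> < g}" by blast
  next
    assume "a \<in> {n' * \<xi> | \<xi>. odd \<xi> \<and> 1 \<le> \<xi> \<and> \<xi> < g}"
    then obtain \<xi> where x: "a = n' * \<xi>" "odd \<xi>" "\<xi> < g" by auto
    have "even (g - \<xi>)" using x godd by auto
    then obtain k where k: "g - \<xi> = 2*k" by (rule evenE)
    have "n - a = n' * (g - \<xi>)" using x nn by (simp add: diff_mult_distrib2 ac_simps)
    then show "(2*n') dvd (n-a)" using k by simp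
  qed
  finally show ?thesis by (simp add: n'_def g_def)
qed

lemma castl:
  fixes a m c :: nat
  assumes "a \<le> m"
  shows "(2*(int m+1)) dvd (int c)*(int m + 1 - int a) \<longleftrightarrow> (2*(m+1)) dvd c*((m+1)-a)"
proof -
  have e1: "int (2*(m+1)) = 2*(int m+1)" by simp
  have e2: "int (c*((m+1)-a)) = int c * (int m+1-int a)" using assms by (simp add: of_nat_diff)
  show ?thesis unfolding e1[symmetric] e2[symmetric] by (rule of_nat_dvd_iff)
qed

theorem theorem3p3p2:
  fixes m t :: nat
  assumes "m \<ge> 2" and "t \<ge> 1"
  defines "gp \<equiv> gcd (m + 1) (2 ^ t + 1)"
      and "gm \<equiv> gcd (m + 1) (2 ^ t - 1)"
  shows "{a \<in> {1..m}. (f2 m ^^ t) a = a} =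
           {(m + 1) div gp * \<xi> | \<xi>. odd \<xi> \<and> 1 \<le> \<xi> \<and> \<xi> < gp}
         \<union> {(m + 1) div gm * \<xi> | \<xi>. odd \<xi> \<and> 1 \<le> \<xi> \<and> \<xi> < gm}"
proof -
  define n where "n = int m + 1"
  have n1: "n \<ge> 1" by (simp add: n_def)
  have key: "(f2 m ^^ t) a = a \<longleftrightarrow>
      (2*n) dvd (2^t - 1)*(n - int a) \<or> (2*n) dvd (2^t + 1)*(n - int a)"
    if a: "1 \<le> a" "a \<le> m" for a
  proof -
    define y where "y = n - int a"
    have Gy: "G n y = int a" using a by (simp add: G_def y_def n_def)
    have A: "G n z = int a \<longleftrightarrow> z mod (2*n) = n - int a \<or> z mod (2*n) = n + int a" for z
      unfolding G_def by arith
    have ym: "y mod (2*n) = n - int a" using a by (simp add: y_def n_def)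
    have ym2: "(-y) mod (2*n) = n + int a"
    proof -
      have "(-y) mod (2*n) = (-y + 2*n) mod (2*n)" by simp
      also have "-y + 2*n = n + int a" by (simp add: y_def)
      also have "(n + int a) mod (2*n) = n + int a" using a by (simp add: n_def)
      finally show ?thesis .
    qed
    have d1: "(2*n) dvd (2^t - 1)*y \<longleftrightarrow> (2^t*y) mod (2*n) = n - int a"
    proof -
      have "(2*n) dvd (2^t - 1)*y \<longleftrightarrow> (2*n) dvd (2^t*y - y)" by (simp add: left_diff_distrib)
      also have "\<dots> \<longleftrightarrow> (2^t*y) mod (2*n) = y mod (2*n)" by (simp add: mod_eq_dvd_iff)
      finally show ?thesis using ym by simp
    qed
    have d2: "(2*n) dvd (2^t + 1)*y \<longleftrightarrow> (2^t*y) mod (2*n) = n + int a"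
    proof -
      have "(2*n) dvd (2^t + 1)*y \<longleftrightarrow> (2*n) dvd (2^t*y - (-y))" by (simp add: distrib_right)
      also have "\<dots> \<longleftrightarrow> (2^t*y) mod (2*n) = (-y) mod (2*n)" by (simp only: mod_eq_dvd_iff)
      finally show ?thesis using ym2 by simp
    qed
    have L: "(f2 m ^^ t) a = (if \<exists>j<t. G n (2^j*y) = 0 then 0 else nat (G n (2^t*y)))"
      using L2[where m=m and k=t and y=y] Gy by (auto simp add: n_def)
    show ?thesis
    proof
      assume fx: "(f2 m ^^ t) a = a"
      have nz: "\<not> (\<exists>j<t. G n (2^j*y) = 0)" using fx L a by (auto split: if_splits)
      have "(f2 m ^^ t) a = nat (G n (2^t*y))" using L nz by (simp only: nz if_False)
      then have "nat (G n (2^t*y)) = a" using fx by simp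
      then have "G n (2^t*y) = int a" by (simp add: G_def nat_eq_iff)
      then show "(2*n) dvd (2^t - 1)*(n - int a) \<or> (2*n) dvd (2^t + 1)*(n - int a)"
        using A d1 d2 y_def by auto
    next
      assume cg: "(2*n) dvd (2^t - 1)*(n - int a) \<or> (2*n) dvd (2^t + 1)*(n - int a)"
      then have cm: "(2^t*y) mod (2*n) = n - int a \<or> (2^t*y) mod (2*n) = n + int a"
        using d1 d2 y_def by auto
      have nz: "\<not> (\<exists>j<t. G n (2^j*y) = 0)"
      proof
        assume "\<exists>j<t. G n (2^j*y) = 0"
        then obtain j where j: "j < t" "G n (2^j*y) = 0" by auto
        have "(2^j*y) mod (2*n) = n" using j(2) by (simp add: G_def)
        moreover have "n mod (2*n) = n" using n1 by simp
        ultimately have "(2^j*y) mod (2*n) = n mod (2*n)" by simp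
        then have "(2*n) dvd (2^j*y - n)" by (simp only: mod_eq_dvd_iff)
        then have "(2*n) dvd 2^(t-j) * (2^j*y - n)" by simp
        moreover have "(2*n) dvd 2^(t-j) * n"
        proof -
          obtain d where d: "t - j = Suc d" using j(1) by (cases "t-j") auto
          show ?thesis unfolding d by simp
        qed
        ultimately have "(2*n) dvd 2^(t-j) * (2^j*y - n) + 2^(t-j) * n" by (rule dvd_add)
        moreover have "2^(t-j) * (2^j*y - n) + 2^(t-j) * n = (2::int)^t * y"
          using j(1) by (simp add: algebra_simps power_add[symmetric])
        ultimately have "(2^t*y) mod (2*n) = 0" by simp
        then show False using cm a by (auto simp: n_def)
      qed
      have "G n (2^t*y) = int a" using A cm by auto
      moreover have "(f2 m ^^ t) a = nat (G n (2^t*y))" using L nz by (simp only: nz if_False)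
      ultimately show "(f2 m ^^ t) a = a" by simp
    qed
  qed
  have odd1: "odd ((2::nat)^t - 1)" "odd ((2::nat)^t + 1)" using assms(2) by auto
  have c1: "(2::int)^t - 1 = int ((2::nat)^t - 1)" by (simp add: of_nat_diff)
  have c2: "(2::int)^t + 1 = int ((2::nat)^t + 1)" by simp
  have cast: "(2*n) dvd (2^t - 1)*(n - int a) \<longleftrightarrow> (2*(m+1)) dvd ((2::nat)^t - 1)*((m+1) - a)"
     "(2*n) dvd (2^t + 1)*(n - int a) \<longleftrightarrow> (2*(m+1)) dvd ((2::nat)^t + 1)*((m+1) - a)"
    if "a \<le> m" for a
    unfolding c1 c2 n_def using castl[OF that] by blast+
  show ?thesis
  proof (rule set_eqI)
    fix a
    show "a \<in> {a \<in> {1..m}. (f2 m ^^ t) a = a} \<longleftrightarrow> a \<in> {(m + 1) div gp * \<xi> | \<xi>. odd \<xi> \<and> 1 \<le> \<xi> \<and> \<xi> < gp}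
         \<union> {(m + 1) div gm * \<xi> | \<xi>. odd \<xi> \<and> 1 \<le> \<xi> \<and> \<xi> < gm}"
    proof (cases "1 \<le> a \<and> a \<le> m")
      case True
      then show ?thesis using key[of a] cast[of a] NT[OF odd1(1), of a "m+1"] NT[OF odd1(2), of a "m+1"]
        unfolding gp_def gm_def by auto
    next
      case False
      have H: "a \<notin> {(m + 1) div g * \<xi> | \<xi>. odd \<xi> \<and> 1 \<le> \<xi> \<and> \<xi> < g}" if g: "g dvd (m+1)" "g > 0" for g
      proof
        assume "a \<in> {(m + 1) div g * \<xi> | \<xi>. odd \<xi> \<and> 1 \<le> \<xi> \<and> \<xi> < g}"
        then obtain \<xi> where x: "a = (m+1) div g * \<xi>" "1 \<le> \<xi>" "\<xi> < g" by auto
        obtain q where q: "m + 1 = g * q" using g by auto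
        have qp: "q > 0" using q by (cases q) auto
        have "a = q * \<xi>" using x q g by simp
        moreover have "q * \<xi> < q * g" using x qp by simp
        moreover have "q*\<xi> \<ge> 1" using x qp by simp
        ultimately have "1 \<le> a" "a < m + 1" using q by (simp_all add: ac_simps)
        then show False using False by simp
      qed
      have "a \<notin> {(m + 1) div gp * \<xi> | \<xi>. odd \<xi> \<and> 1 \<le> \<xi> \<and> \<xi> < gp}"
        by (rule H) (simp_all add: gp_def)
      moreover have "a \<notin> {(m + 1) div gm * \<xi> | \<xi>. odd \<xi> \<and> 1 \<le> \<xi> \<and> \<xi> < gm}"
        by (rule H) (simp_all add: gm_def)
      ultimately show ?thesis using False by auto
    qed
  qed
qed

end
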